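(* Let $m,n,k$ be positive integers with $(m,k-1)=1$ and $n=\mathrm{ind}_m(k)$, let $G=G(m,n,k)=\langle a,b;\ a^m=1,\ b^n=1,\ b^{-1}ab=a^k\rangle$, let $S\subseteq\mathbb{Z}_m$ be a base, and suppose $\Sigma_G(S)$ is complete. Then $\Sigma_G(S)=\dot{\bigcup}_{x\in S^*}C(x,1)$ (a disjoint union) and $|\Sigma_G(S)|=m\,|S^*|$.
   Context: $\mathrm{ind}_m(k)$ is the least positive integer $d$ with $k^d\equiv 1\pmod m$. Every element of $G$ is written uniquely as $a^ib^j$ with $i\in\mathbb{Z}_m$, $j\in\mathbb{Z}_n$. For $t\ge 0$ let $k_t=k^t-1 \pmod m$. Maps are written on the right, and $\mu\circ\nu$ means "first $\mu$, then $\nu$". For $x,y\in\mathbb{Z}_m$ the mu-map $\mu(x,y):G\to G$ is $(a^ib^j)\mu(x,y)=a^{xik^j-yk_j}$. The container is $C(x,y)=\{\mu(x,yz): z\in\mathbb{Z}_m\}$. For $S\subseteq\mathbb{Z}_m$, $I(S)$ is the set of elements of $S$ invertible in $\mathbb{Z}_m$, and $S^*$ is the multiplicative subsemigroup of $\mathbb{Z}_m$ generated by $S$. A base is $S\subseteq\mathbb{Z}_m$ with $0\in S$ and $I(S)\neq\varnothing$. $\Sigma_G(S)$ is the semigroup under composition generated by $\{\mu(s,z): s\in S, z\in\mathbb{Z}_m\}$. For $x\in S^*$, $Y(x)=\{s^*z:\ s^*\in S^*, z\in\mathbb{Z}_m, \exists s\in S \text{ with } x\equiv ss^* \pmod m\}$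 and the $x$-family is $\mathcal{F}_G(x,S)=\{C(x,y): y\in Y(x)\}$. The $x$-family is complete if $C(x,1)\in\mathcal{F}_G(x,S)$, and $\Sigma_G(S)$ is complete if the $x$-family is complete for every $x\in S^*$. *)

theory Defs
  imports Main "HOL-Number_Theory.Cong" "HOL-Library.FuncSet" "HOL-Library.Disjoint_Sets"
begin

text \<open>The metacyclic group G(m,n,k) is represented by its normal forms a^i b^j,
  encoded as pairs (i, j) with 0 \<le> i < m, 0 \<le> j < n.\<close>

definition Gcar :: "int \<Rightarrow> nat \<Rightarrow> (int \<times> nat) set" where
  "Gcar m n = {0..<m} \<times> {0..<n}"

definition is_ind :: "int \<Rightarrow> int \<Rightarrow> nat \<Rightarrow> bool" where
  "is_ind m k n \<longleftrightarrow> 0 < n \<and> [k ^ n = 1] (mod m) \<and> (\<forall>d. 0 < d \<and> d < n \<longrightarrow> \<not> [k ^ d = 1] (mod m))"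

definition kk :: "int \<Rightarrow> int \<Rightarrow> nat \<Rightarrow> int" where
  "kk m k t = (k ^ t - 1) mod m"

text \<open>mu-map: (a^i b^j) mu(x,y) = a^(x i k^j - y k_j)\<close>
definition mu :: "int \<Rightarrow> nat \<Rightarrow> int \<Rightarrow> int \<Rightarrow> int \<Rightarrow> (int \<times> nat \<Rightarrow> int \<times> nat)" where
  "mu m n k x y = (\<lambda>(i, j) \<in> Gcar m n. ((x * i * k ^ j - y * kk m k j) mod m, 0))"

definition container :: "int \<Rightarrow> nat \<Rightarrow> int \<Rightarrow> int \<Rightarrow> int \<Rightarrow> (int \<times> nat \<Rightarrow> int \<times> nat) set" where
  "container m n k x y = {mu m n k x ((y * z) mod m) | z. z \<in> {0..<m}}"

definition is_base :: "int \<Rightarrow> int set \<Rightarrow> bool" where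
  "is_base m S \<longleftrightarrow> S \<subseteq> {0..<m} \<and> 0 \<in> S \<and> (\<exists>s\<in>S. coprime s m)"

inductive_set Sstar :: "int \<Rightarrow> int set \<Rightarrow> int set" for m S where
  gen: "s \<in> S \<Longrightarrow> s \<in> Sstar m S"
| mult: "a \<in> Sstar m S \<Longrightarrow> b \<in> Sstar m S \<Longrightarrow> (a * b) mod m \<in> Sstar m S"

text \<open>Sigma_G(S): semigroup under composition generated by the mu(s,z);
  compose first f then g is the map g \<circ> f on the carrier.\<close>
inductive_set Sigma :: "int \<Rightarrow> nat \<Rightarrow> int \<Rightarrow> int set \<Rightarrow> (int \<times> nat \<Rightarrow> int \<times> nat) set"
  for m n k S where
  gen: "s \<in> S \<Longrightarrow> z \<in> {0..<m} \<Longrightarrow> mu m n k s z \<in> Sigma m n k S"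
| comp: "f \<in> Sigma m n k S \<Longrightarrow> g \<in> Sigma m n k S \<Longrightarrow> compose (Gcar m n) g f \<in> Sigma m n k S"

definition Yset :: "int \<Rightarrow> int set \<Rightarrow> int \<Rightarrow> int set" where
  "Yset m S x = {(t * z) mod m | t z. t \<in> Sstar m S \<and> z \<in> {0..<m} \<and> (\<exists>s\<in>S. [x = s * t] (mod m))}"

definition family :: "int \<Rightarrow> nat \<Rightarrow> int \<Rightarrow> int set \<Rightarrow> int \<Rightarrow> (int \<times> nat \<Rightarrow> int \<times> nat) set set" where
  "family m n k S x = {container m n k x y | y. y \<in> Yset m S x}"

definition family_complete :: "int \<Rightarrow> nat \<Rightarrow> int \<Rightarrow> int set \<Rightarrow> int \<Rightarrow> bool" where
  "family_complete m n k S x \<longleftrightarrow> container m n k x 1 \<in> family m n k S x"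

definition Sigma_complete :: "int \<Rightarrow> nat \<Rightarrow> int \<Rightarrow> int set \<Rightarrow> bool" where
  "Sigma_complete m n k S \<longleftrightarrow> (\<forall>x \<in> Sstar m S. family_complete m n k S x)"

end

theory Submission
  imports Defs
begin

lemma mu_mod: "mu m n k x y = mu m n k (x mod m) (y mod m)"
  unfolding mu_def
proof (rule ext)
  fix p :: "int \<times> nat"
  obtain i j where p: "p = (i, j)" by fastforce
  have "(x * i * k ^ j - y * kk m k j) mod m = ((x mod m) * i * k ^ j - (y mod m) * kk m k j) mod m"
  proof -
    have "[x * i * k ^ j - y * kk m k j = (x mod m) * i * k ^ j - (y mod m) * kk m k j] (mod m)"
      by (intro cong_diff cong_mult cong_refl) (simp_all add: cong_def)
    then show ?thesis by (simp add: cong_def)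
  qed
  then show "(\<lambda>(i, j)\<in>Gcar m n. ((x * i * k ^ j - y * kk m k j) mod m, 0)) p =
    (\<lambda>(i, j)\<in>Gcar m n. ((x mod m * i * k ^ j - y mod m * kk m k j) mod m, 0)) p"
    by (simp add: p)
qed

lemma kk0: "kk m k 0 = 0" by (simp add: kk_def)

lemma mu_comp:
  assumes "0 < m" "0 < n"
  shows "compose (Gcar m n) (mu m n k a b) (mu m n k c d) = mu m n k (a * c) (a * d)"
proof (rule ext)
  fix p :: "int \<times> nat"
  obtain i j where p: "p = (i, j)" by fastforce
  show "compose (Gcar m n) (mu m n k a b) (mu m n k c d) p = mu m n k (a * c) (a * d) p"
  proof (cases "p \<in> Gcar m n")
    case True
    define v where "v = (c * i * k ^ j - d * kk m k j) mod m"
    have vin: "(v, 0::nat) \<in> Gcar m n" using assms unfolding v_def Gcar_def by auto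
    have "mu m n k c d p = (v, 0)" using True unfolding mu_def v_def p by simp
    moreover have "mu m n k a b (v, 0) = ((a * v) mod m, 0)"
      using vin unfolding mu_def by (simp add: kk0)
    moreover have "(a * v) mod m = (a * c * i * k ^ j - a * d * kk m k j) mod m"
      unfolding v_def by (simp add: mod_simps algebra_simps)
    moreover have "mu m n k (a * c) (a * d) p = ((a * c * i * k ^ j - a * d * kk m k j) mod m, 0)"
      using True unfolding mu_def p by simp
    moreover have "compose (Gcar m n) (mu m n k a b) (mu m n k c d) p = mu m n k a b (mu m n k c d p)"
      using True by (simp add: compose_def)
    ultimately show ?thesis by simp
  next
    case False
    then show ?thesis unfolding compose_def mu_def p by simp
  qed
qed

lemma Sstar_range: "x \<in> Sstar m S \<Longrightarrow> S \<subseteq> {0..<m} \<Longrightarrow> 0 < m \<Longrightarrow> x \<in> {0..<m}"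
  by (induction rule: Sstar.induct) auto

lemma container1: "container m n k x 1 = {mu m n k x z | z. z \<in> {0..<m}}"
  unfolding container_def
proof (intro set_eqI iffI)
  fix f assume "f \<in> {mu m n k x ((1 * z) mod m) |z. z \<in> {0..<m}}"
  then obtain z where "f = mu m n k x ((1 * z) mod m)" "z \<in> {0..<m}" by blast
  then show "f \<in> {mu m n k x z |z. z \<in> {0..<m}}" by auto
next
  fix f assume "f \<in> {mu m n k x z |z. z \<in> {0..<m}}"
  then obtain z where z: "f = mu m n k x z" "z \<in> {0..<m}" by blast
  then have "z mod m = z" by simp
  then show "f \<in> {mu m n k x ((1 * z) mod m) |z. z \<in> {0..<m}}" using z
    by (intro CollectI exI[of _ z]) simp
qed



lemma Sigma_sub:
  assumes "f \<in> Sigma m n k S" "0 < m" "0 < n"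
  shows "\<exists>x\<in>Sstar m S. \<exists>z\<in>{0..<m}. f = mu m n k x z"
  using assms(1)
proof (induction rule: Sigma.induct)
  case (gen s z)
  then show ?case by (intro bexI[of _ s] bexI[of _ z]) (auto intro: Sstar.gen)
next
  case (comp f g)
  then obtain x z x' z' where h: "x \<in> Sstar m S" "z \<in> {0..<m}" "f = mu m n k x z"
    "x' \<in> Sstar m S" "z' \<in> {0..<m}" "g = mu m n k x' z'" by blast
  have "compose (Gcar m n) g f = mu m n k ((x' * x) mod m) ((x' * z) mod m)"
    using h mu_comp[OF assms(2,3)] mu_mod by metis
  moreover have "(x' * x) mod m \<in> Sstar m S" using h by (intro Sstar.mult)
  moreover have "(x' * z) mod m \<in> {0..<m}" using assms(2) by simp
  ultimately show ?case by blast
qed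

lemma exists_mu:
  assumes "t \<in> Sstar m S" "0 < m" "0 < n"
  shows "\<exists>y. mu m n k t y \<in> Sigma m n k S"
  using assms(1)
proof (induction rule: Sstar.induct)
  case (gen s)
  then show ?case using assms(2) by (intro exI[of _ 0] Sigma.gen) auto
next
  case (mult a b)
  then obtain y y' where "mu m n k a y \<in> Sigma m n k S" "mu m n k b y' \<in> Sigma m n k S" by blast
  then have "compose (Gcar m n) (mu m n k a y) (mu m n k b y') \<in> Sigma m n k S"
    by (rule Sigma.comp[rotated])
  then have "mu m n k (a * b) (a * y') \<in> Sigma m n k S" using mu_comp[OF assms(2,3)] by simp
  then have "mu m n k ((a * b) mod m) ((a * y') mod m) \<in> Sigma m n k S" using mu_mod by metis
  then show ?case by blast
qed

lemma sup_part:
  assumes "0 < m" "0 < n" "is_base m S" "Sigma_complete m n k S"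
    and x: "x \<in> Sstar m S" and z: "z \<in> {0..<m}"
  shows "mu m n k x z \<in> Sigma m n k S"
proof -
  have Sm: "S \<subseteq> {0..<m}" using assms(3) by (simp add: is_base_def)
  have xr: "x \<in> {0..<m}" using Sstar_range[OF x Sm assms(1)] .
  have "family_complete m n k S x" using assms(4) x by (simp add: Sigma_complete_def)
  then obtain y where y: "y \<in> Yset m S x" "container m n k x 1 = container m n k x y"
    unfolding family_complete_def family_def by auto
  then obtain t z0 s where t: "y = (t * z0) mod m" "t \<in> Sstar m S" "z0 \<in> {0..<m}" "s \<in> S"
    "[x = s * t] (mod m)"
    unfolding Yset_def by blast
  have "mu m n k x z \<in> container m n k x 1" unfolding container1 using z by blast
  then have "mu m n k x z \<in> container m n k x y" using y by simp
  then obtain w where w: "mu m n k x z = mu m n k x ((y * w) mod m)"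
    unfolding container_def by blast
  obtain y1 where y1: "mu m n k t y1 \<in> Sigma m n k S" using exists_mu[OF t(2) assms(1,2)] by blast
  have g: "mu m n k s ((z0 * w) mod m) \<in> Sigma m n k S"
    using t(4) assms(1) by (intro Sigma.gen) auto
  have "compose (Gcar m n) (mu m n k t y1) (mu m n k s ((z0 * w) mod m)) \<in> Sigma m n k S"
    using Sigma.comp[OF g y1] .
  then have c: "mu m n k (t * s) (t * ((z0 * w) mod m)) \<in> Sigma m n k S"
    using mu_comp[OF assms(1,2)] by simp
  have e1: "(t * s) mod m = x mod m" using t(5) unfolding cong_def by (simp add: mult.commute)
  have e2: "(t * ((z0 * w) mod m)) mod m = ((y * w) mod m) mod m"
    unfolding t(1) by (simp add: mod_simps mult.assoc)
  have "mu m n k (t * s) (t * ((z0 * w) mod m)) = mu m n k x ((y * w) mod m)"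
    using mu_mod e1 e2 by metis
  then show ?thesis using c w by simp
qed

lemma mu_inj:
  assumes "0 < m" "is_ind m k n" "coprime m (k - 1)"
    and "x \<in> {0..<m}" "x' \<in> {0..<m}" "z \<in> {0..<m}" "z' \<in> {0..<m}"
    and eq: "mu m n k x z = mu m n k x' z'"
  shows "x = x' \<and> z = z'"
proof (cases "m = 1")
  case True
  then show ?thesis using assms by auto
next
  case False
  then have m2: "1 < m" using assms(1) by simp
  have n2: "2 \<le> n"
  proof (rule ccontr)
    assume "\<not> 2 \<le> n"
    then have "n = 1" using assms(2) by (auto simp: is_ind_def)
    then have "[k = 1] (mod m)" using assms(2) by (simp add: is_ind_def)
    then have "m dvd (k - 1)" by (simp add: cong_iff_dvd_diff)
    then have "\<bar>m\<bar> = 1" using coprime_common_divisor_int[OF assms(3) dvd_refl] by simp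
    then show False using m2 by simp
  qed
  have "mu m n k x z (1, 0) = mu m n k x' z' (1, 0)" using eq by simp
  moreover have "(1::int, 0::nat) \<in> Gcar m n" using m2 n2 by (simp add: Gcar_def)
  ultimately have "x mod m = x' mod m" unfolding mu_def by (simp add: kk0)
  then have xx: "x = x'" using assms(4,5) by simp
  have "mu m n k x z (0, 1) = mu m n k x' z' (0, 1)" using eq by simp
  moreover have "(0::int, 1::nat) \<in> Gcar m n" using m2 n2 by (simp add: Gcar_def)
  ultimately have "(- (z * ((k - 1) mod m))) mod m = (- (z' * ((k - 1) mod m))) mod m"
    unfolding mu_def by (simp add: kk_def)
  then have "[z * (k - 1) = z' * (k - 1)] (mod m)"
    unfolding cong_def by (metis mod_minus_cong mod_mult_right_eq minus_minus)
  then have "[z = z'] (mod m)" using cong_mult_rcancel assms(3)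
    by (metis coprime_commute)
  then have "z = z'" using assms(6,7) by (simp add: cong_def)
  then show ?thesis using xx by simp
qed

theorem theorem4p8:
  fixes m k :: int and n :: nat and S :: "int set"
  assumes "0 < m" and "0 < k" and "coprime m (k - 1)"
    and "is_ind m k n"
    and "is_base m S"
    and "Sigma_complete m n k S"
  shows "Sigma m n k S = (\<Union>x \<in> Sstar m S. container m n k x 1) \<and>
         disjoint_family_on (\<lambda>x. container m n k x 1) (Sstar m S) \<and>
         card (Sigma m n k S) = nat m * card (Sstar m S)"
proof -
  have n0: "0 < n" using assms(4) by (simp add: is_ind_def)
  have Sm: "S \<subseteq> {0..<m}" using assms(5) by (simp add: is_base_def)
  have SS: "Sstar m S \<subseteq> {0..<m}" using Sstar_range[OF _ Sm assms(1)] by blast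
  define F where "F = (\<lambda>p :: int \<times> int. mu m n k (fst p) (snd p))"
  have U: "(\<Union>x \<in> Sstar m S. container m n k x 1) = F ` (Sstar m S \<times> {0..<m})"
  proof (intro set_eqI iffI)
    fix f assume "f \<in> (\<Union>x \<in> Sstar m S. container m n k x 1)"
    then obtain x z where "x \<in> Sstar m S" "z \<in> {0..<m}" "f = mu m n k x z"
      unfolding container1 by blast
    then show "f \<in> F ` (Sstar m S \<times> {0..<m})" unfolding F_def
      by (intro rev_image_eqI[of "(x, z)"]) auto
  next
    fix f assume "f \<in> F ` (Sstar m S \<times> {0..<m})"
    then obtain x z where "x \<in> Sstar m S" "z \<in> {0..<m}" "f = mu m n k x z"
      unfolding F_def by auto
    then show "f \<in> (\<Union>x \<in> Sstar m S. container m n k x 1)"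
      unfolding container1 by blast
  qed
  have E: "Sigma m n k S = F ` (Sstar m S \<times> {0..<m})"
  proof
    show "Sigma m n k S \<subseteq> F ` (Sstar m S \<times> {0..<m})"
    proof
      fix f assume "f \<in> Sigma m n k S"
      then obtain x z where "x \<in> Sstar m S" "z \<in> {0..<m}" "f = mu m n k x z"
        using Sigma_sub[OF _ assms(1) n0] by blast
      then show "f \<in> F ` (Sstar m S \<times> {0..<m})" unfolding F_def by force
    qed
    show "F ` (Sstar m S \<times> {0..<m}) \<subseteq> Sigma m n k S"
      unfolding F_def using sup_part[OF assms(1) n0 assms(5,6)] by auto
  qed
  have inj: "inj_on F (Sstar m S \<times> {0..<m})"
  proof (rule inj_onI)
    fix p q assume "p \<in> Sstar m S \<times> {0..<m}" "q \<in> Sstar m S \<times> {0..<m}" "F p = F q"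
    then show "p = q" using mu_inj[OF assms(1,4,3)] SS unfolding F_def
      by (metis mem_Times_iff prod.expand subsetD)
  qed
  have D: "disjoint_family_on (\<lambda>x. container m n k x 1) (Sstar m S)"
    unfolding disjoint_family_on_def container1
  proof (intro ballI impI)
    fix x y assume xy: "x \<in> Sstar m S" "y \<in> Sstar m S" "x \<noteq> y"
    show "{mu m n k x z |z. z \<in> {0..<m}} \<inter> {mu m n k y z |z. z \<in> {0..<m}} = {}"
    proof (rule ccontr)
      assume "{mu m n k x z |z. z \<in> {0..<m}} \<inter> {mu m n k y z |z. z \<in> {0..<m}} \<noteq> {}"
      then obtain z z' where "z \<in> {0..<m}" "z' \<in> {0..<m}" "mu m n k x z = mu m n k y z'" by blast
      then show False using mu_inj[OF assms(1,4,3)] xy SS by blast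
    qed
  qed
  have fin: "finite (Sstar m S)" using SS finite_subset by blast
  have "card (Sigma m n k S) = card (Sstar m S \<times> {0..<m})"
    unfolding E using card_image[OF inj] .
  also have "\<dots> = nat m * card (Sstar m S)" by (simp add: card_cartesian_product)
  finally show ?thesis using E U D by simp
qed

end
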